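(* Let $p\in[1,\infty]$, let $A\in\mathbb{R}^{m\times n}$ have full column rank, and let $\mathcal{A} = \{Ax: x\in\mathbb{R}^n\}$. Let $\Phi\in\mathbb{R}^{s\times m}$ with $s\ge n$, and suppose there are $\sigma_\Phi>0$, $\kappa_\Phi\ge1$ with $$\sigma_\Phi\|y\|_p \le \|\Phi y\|_p \le \kappa_\Phi\sigma_\Phi\|y\|_p\quad\text{for all } y\in\mathcal{A}.$$ Let $\Phi A = QR$ be a thin QR factorization, with $Q\in\mathbb{R}^{s\times n}$ having orthonormal columns and $R\in\mathbb{R}^{n\times n}$ invertible. Then $\kappa_p(AR^{-1}) \le \kappa_\Phi\, s^{|1/p-1/2|}$.
   Context: For $M \in \mathbb{R}^{m\times n}$, $\sigma_p^{\max}(M) = \max_{\|x\|_2=1}\|Mx\|_p$, $\sigma_p^{\min}(M) = \min_{\|x\|_2=1}\|Mx\|_p$, and $\kappa_p(M) = \sigma_p^{\max}(M)/\sigma_p^{\min}(M)$. Convention $1/\infty = 0$. *)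

theory Defs
  imports "HOL-Analysis.Analysis" "HOL-Library.Extended_Real"
begin

definition pinv :: "ereal \<Rightarrow> real" where
  "pinv p = (if p = \<infinity> then 0 else 1 / real_of_ereal p)"

definition pnorm :: "ereal \<Rightarrow> real^'k \<Rightarrow> real" where
  "pnorm p x = (if p = \<infinity> then Max (range (\<lambda>i. \<bar>x $ i\<bar>))
                else (\<Sum>i\<in>UNIV. \<bar>x $ i\<bar> powr real_of_ereal p) powr (1 / real_of_ereal p))"

definition sigma_max :: "ereal \<Rightarrow> real^'n^'m \<Rightarrow> real" where
  "sigma_max p M = (SUP x\<in>{x :: real^'n. norm x = 1}. pnorm p (M *v x))"

definition sigma_min :: "ereal \<Rightarrow> real^'n^'m \<Rightarrow> real" where
  "sigma_min p M = (INF x\<in>{x :: real^'n. norm x = 1}. pnorm p (M *v x))"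

definition kappa :: "ereal \<Rightarrow> real^'n^'m \<Rightarrow> real" where
  "kappa p M = sigma_max p M / sigma_min p M"

end

theory Submission
  imports Defs
begin

lemma powr_split1: assumes "(a::real) \<ge> 0" shows "a powr r = a * a powr (r - 1)"
proof (cases "a = 0")
  case False
  hence "a * a powr (r - 1) = a powr 1 * a powr (r - 1)" using assms by simp
  also have "\<dots> = a powr (1 + (r - 1))" using False by (simp only: powr_add)
  also have "\<dots> = a powr r" by simp
  finally show ?thesis by simp
qed simp

lemma sum_powr_le:
  assumes "finite I" "\<And>i. i \<in> I \<Longrightarrow> (a i::real) \<ge> 0" "r \<ge> 1"
  shows "(\<Sum>i\<in>I. a i powr r) \<le> (\<Sum>i\<in>I. a i) powr r"
proof -
  define S where "S = (\<Sum>i\<in>I. a i)"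
  have le: "a i \<le> S" if "i \<in> I" for i
    unfolding S_def using assms(1,2) that by (intro member_le_sum) auto
  have "(\<Sum>i\<in>I. a i powr r) = (\<Sum>i\<in>I. a i * a i powr (r-1))"
    using assms(2) by (intro sum.cong refl powr_split1) auto
  also have "\<dots> \<le> (\<Sum>i\<in>I. a i * S powr (r-1))"
    using assms le by (intro sum_mono mult_left_mono powr_mono2) auto
  also have "\<dots> = S * S powr (r-1)" by (simp add: S_def sum_distrib_right)
  also have "\<dots> = S powr r" using sum_nonneg[of I a] assms(2)
    by (subst powr_split1[of S r]) (auto simp: S_def)
  finally show ?thesis by (simp add: S_def)
qed

lemma jensen_pos:
  assumes "finite I" "I \<noteq> {}" "\<And>i. i \<in> I \<Longrightarrow> (a i::real) > 0" "r \<ge> 1"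
  shows "(\<Sum>i\<in>I. a i) powr r \<le> real (card I) powr (r - 1) * (\<Sum>i\<in>I. a i powr r)"
proof -
  define k where "k = real (card I)"
  have k: "k > 0" using assms by (simp add: k_def card_gt_0_iff)
  have "(\<lambda>x. x powr r) (\<Sum>i\<in>I. (1/k) *\<^sub>R a i) \<le> (\<Sum>i\<in>I. (1/k) * (\<lambda>x. x powr r) (a i))"
    by (rule convex_on_sum[OF assms(1,2) powr_convex[OF assms(4)]]) (use assms k in \<open>auto simp: k_def\<close>)
  hence "((\<Sum>i\<in>I. a i) / k) powr r \<le> (\<Sum>i\<in>I. a i powr r) / k"
    by (simp add: sum_divide_distrib[symmetric] sum_distrib_left[symmetric] divide_inverse mult.commute)
  hence "(\<Sum>i\<in>I. a i) powr r / k powr r \<le> (\<Sum>i\<in>I. a i powr r) / k"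
    using assms k by (subst (asm) powr_divide) (auto intro: sum_nonneg less_imp_le)
  hence "(\<Sum>i\<in>I. a i) powr r \<le> (\<Sum>i\<in>I. a i powr r) / k * k powr r"
    using k by (simp add: divide_le_eq)
  also have "\<dots> = k powr (r - 1) * (\<Sum>i\<in>I. a i powr r)"
    using k by (simp add: powr_diff)
  finally show ?thesis by (simp add: k_def)
qed

lemma jensen:
  assumes "finite I" "\<And>i. i \<in> I \<Longrightarrow> (a i::real) \<ge> 0" "r \<ge> 1"
  shows "(\<Sum>i\<in>I. a i) powr r \<le> real (card I) powr (r - 1) * (\<Sum>i\<in>I. a i powr r)"
proof -
  define J where "J = {i\<in>I. a i > 0}"
  have J: "finite J" "J \<subseteq> I" using assms by (auto simp: J_def)
  have s1: "(\<Sum>i\<in>I. a i) = (\<Sum>i\<in>J. a i)"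
    using assms by (intro sum.mono_neutral_right) (auto simp: J_def less_le)
  have s2: "(\<Sum>i\<in>I. a i powr r) = (\<Sum>i\<in>J. a i powr r)"
    using assms by (intro sum.mono_neutral_right) (auto simp: J_def less_le)
  show ?thesis
  proof (cases "J = {}")
    case True thus ?thesis using s1 s2 by simp
  next
    case False
    have "(\<Sum>i\<in>J. a i) powr r \<le> real (card J) powr (r - 1) * (\<Sum>i\<in>J. a i powr r)"
      by (rule jensen_pos) (use J False assms in \<open>auto simp: J_def\<close>)
    also have "\<dots> \<le> real (card I) powr (r - 1) * (\<Sum>i\<in>J. a i powr r)"
      using assms J by (intro mult_right_mono powr_mono2 sum_nonneg) (auto simp: card_mono)
    finally show ?thesis using s1 s2 by simp
  qed
qed

lemma norm_powr: "norm (y::real^'s) = (\<Sum>i\<in>UNIV. \<bar>y$i\<bar> powr 2) powr (1/2)"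
  by (simp add: norm_vec_def L2_set_def powr_half_sqrt sum_nonneg)

lemma fin_bounds:
  fixes pr :: real
  assumes pr: "pr \<ge> 1"
  shows "\<exists>L>0. \<forall>y::real^'s. L * norm y \<le> (\<Sum>i\<in>UNIV. \<bar>y$i\<bar> powr pr) powr (1/pr) \<and>
     (\<Sum>i\<in>UNIV. \<bar>y$i\<bar> powr pr) powr (1/pr) \<le> L * real CARD('s) powr \<bar>1/pr - 1/2\<bar> * norm y"
proof -
  define s where "s = real CARD('s)"
  have s: "s > 0" by (simp add: s_def)
  show ?thesis
  proof (cases "pr \<ge> 2")
    case True
    define r where "r = pr / 2"
    have r: "r \<ge> 1" using True by (simp add: r_def)
    have c: "\<bar>1/pr - 1/2\<bar> = 1/2 - 1/pr" using True by (simp add: field_simps)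
    show ?thesis
    proof (intro exI[of _ "s powr (1/pr - 1/2)"] conjI allI)
      show "s powr (1/pr - 1/2) > 0" using s by simp
      fix y :: "real^'s"
      define a where "a i = \<bar>y$i\<bar> powr 2" for i
      define T where "T = (\<Sum>i\<in>UNIV. a i powr r)"
      define N where "N = (\<Sum>i\<in>UNIV. a i)"
      have a0: "a i \<ge> 0" for i by (simp add: a_def)
      have T: "(\<Sum>i\<in>UNIV. \<bar>y$i\<bar> powr pr) = T"
        unfolding T_def a_def powr_powr r_def by simp
      have ny: "norm y = N powr (1/2)" by (simp add: norm_powr N_def a_def)
      have N0: "N \<ge> 0" unfolding N_def using a0 by (simp add: sum_nonneg)
      have T0: "T \<ge> 0" unfolding T_def by (simp add: sum_nonneg)
      have h1: "T \<le> N powr r" unfolding T_def N_def using a0 r by (intro sum_powr_le) auto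
      have h2: "N powr r \<le> s powr (r - 1) * T" unfolding T_def N_def s_def using a0 r by (intro jensen) auto
      have e1: "(N powr r) powr (1/pr) = N powr (1/2)" using pr by (simp add: powr_powr r_def)
      have up: "T powr (1/pr) \<le> norm y"
        using powr_mono2[OF _ T0 h1, of "1/pr"] pr e1 ny by simp
      have "norm y \<le> (s powr (r - 1) * T) powr (1/pr)"
        using powr_mono2[OF _ _ h2, of "1/pr"] pr e1 ny N0 by simp
      also have "\<dots> = s powr (1/2 - 1/pr) * T powr (1/pr)"
        using pr by (simp add: powr_mult powr_powr r_def field_simps)
      finally have lo: "norm y \<le> s powr (1/2 - 1/pr) * T powr (1/pr)" .
      have one: "s powr (1/pr - 1/2) * s powr (1/2 - 1/pr) = 1" using s by (simp add: powr_add[symmetric])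
      show "s powr (1/pr - 1/2) * norm y \<le> (\<Sum>i\<in>UNIV. \<bar>y$i\<bar> powr pr) powr (1/pr)"
        using mult_left_mono[OF lo, of "s powr (1/pr - 1/2)"] one by (simp add: T mult.assoc[symmetric])
      show "(\<Sum>i\<in>UNIV. \<bar>y$i\<bar> powr pr) powr (1/pr) \<le> s powr (1/pr - 1/2) * real CARD('s) powr \<bar>1/pr - 1/2\<bar> * norm y"
        using up one by (simp add: T c s_def[symmetric])
    qed
  next
    case False
    define r where "r = 2 / pr"
    have r: "r \<ge> 1" using False pr by (simp add: r_def)
    have c: "\<bar>1/pr - 1/2\<bar> = 1/pr - 1/2" using False pr by (simp add: field_simps)
    show ?thesis
    proof (intro exI[of _ 1] conjI allI)
      fix y :: "real^'s"
      define a where "a i = \<bar>y$i\<bar> powr pr" for i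
      define T where "T = (\<Sum>i\<in>UNIV. a i powr r)"
      define N where "N = (\<Sum>i\<in>UNIV. a i)"
      have a0: "a i \<ge> 0" for i by (simp add: a_def)
      have ny: "norm y = T powr (1/2)"
        unfolding T_def a_def norm_powr using pr by (simp add: powr_powr r_def)
      have N0: "N \<ge> 0" unfolding N_def using a0 by (simp add: sum_nonneg)
      have T0: "T \<ge> 0" unfolding T_def by (simp add: sum_nonneg)
      have h1: "T \<le> N powr r" unfolding T_def N_def using a0 r by (intro sum_powr_le) auto
      have h2: "N powr r \<le> s powr (r - 1) * T" unfolding T_def N_def s_def using a0 r by (intro jensen) auto
      have e1: "(N powr r) powr (1/2) = N powr (1/pr)" using pr by (simp add: powr_powr r_def)
      have lo: "norm y \<le> N powr (1/pr)"
        using powr_mono2[OF _ T0 h1, of "1/2"] e1 ny by simp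
      have "N powr (1/pr) \<le> (s powr (r - 1) * T) powr (1/2)"
        using powr_mono2[OF _ _ h2, of "1/2"] e1 N0 by simp
      also have "\<dots> = s powr (1/pr - 1/2) * norm y"
        using pr by (simp add: powr_mult powr_powr r_def field_simps ny)
      finally have up: "N powr (1/pr) \<le> s powr (1/pr - 1/2) * norm y" .
      show "1 * norm y \<le> (\<Sum>i\<in>UNIV. \<bar>y$i\<bar> powr pr) powr (1/pr)"
        using lo by (simp add: N_def a_def)
      show "(\<Sum>i\<in>UNIV. \<bar>y$i\<bar> powr pr) powr (1/pr) \<le> 1 * real CARD('s) powr \<bar>1/pr - 1/2\<bar> * norm y"
        using up by (simp add: N_def a_def c s_def)
    qed simp
  qed
qed

lemma inf_bounds:
  "\<exists>L>0. \<forall>y::real^'s. L * norm y \<le> Max (range (\<lambda>i. \<bar>y $ i\<bar>)) \<and>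
     Max (range (\<lambda>i. \<bar>y $ i\<bar>)) \<le> L * real CARD('s) powr \<bar>0 - 1/2\<bar> * norm y"
proof -
  define s where "s = real CARD('s)"
  have s: "s > 0" by (simp add: s_def)
  show ?thesis
  proof (intro exI[of _ "s powr (-1/2)"] conjI allI)
    show "s powr (-1/2) > 0" using s by simp
    fix y :: "real^'s"
    define M where "M = Max (range (\<lambda>i. \<bar>y $ i\<bar>))"
    have yM: "\<bar>y$i\<bar> \<le> M" for i unfolding M_def by (rule Max_ge) auto
    have M0: "M \<ge> 0" using yM[of undefined] by simp
    have Mn: "M \<le> norm y" unfolding M_def by (auto intro!: Max.boundedI component_le_norm_cart)
    have "norm y = sqrt (\<Sum>i\<in>UNIV. (y$i)^2)" by (simp add: norm_vec_def L2_set_def)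
    also have "\<dots> \<le> sqrt (\<Sum>i\<in>(UNIV::'s set). M^2)"
      using yM by (intro real_sqrt_le_mono sum_mono) (metis abs_le_square_iff abs_of_nonneg M0 abs_ge_zero order_trans)
    also have "\<dots> = sqrt s * M" using M0 by (simp add: s_def real_sqrt_mult)
    finally have ny: "norm y \<le> sqrt s * M" .
    have one: "s powr (-1/2) * sqrt s = 1" using s
      by (simp add: powr_half_sqrt[symmetric] powr_add[symmetric])
    show "s powr (-1/2) * norm y \<le> Max (range (\<lambda>i. \<bar>y $ i\<bar>))"
    proof -
      have "s powr (-1/2) * norm y \<le> s powr (-1/2) * (sqrt s * M)"
        using ny by (intro mult_left_mono) auto
      also have "\<dots> = M" using one by (simp add: mult.assoc[symmetric])
      finally show ?thesis by (simp add: M_def)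
    qed
    show "Max (range (\<lambda>i. \<bar>y $ i\<bar>)) \<le> s powr (-1/2) * real CARD('s) powr \<bar>0 - 1/2\<bar> * norm y"
      using Mn s by (simp add: M_def[symmetric] s_def[symmetric] powr_add[symmetric])
  qed
qed

lemma pnorm_bounds:
  assumes "1 \<le> p"
  shows "\<exists>L>0. \<forall>y::real^'s. L * norm y \<le> pnorm p y \<and>
           pnorm p y \<le> L * real CARD('s) powr \<bar>pinv p - 1/2\<bar> * norm y"
proof (cases "p = \<infinity>")
  case True
  then show ?thesis using inf_bounds by (simp add: pnorm_def pinv_def)
next
  case False
  then obtain pr where p: "p = ereal pr" using assms by (cases p) auto
  have "pr \<ge> 1" using assms p by simp
  from fin_bounds[OF this] show ?thesis by (simp add: p pnorm_def pinv_def)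
qed

theorem mainTheorem7:
  fixes p :: ereal
    and A :: "real^'n^'m"
    and Phi :: "real^'m^'s"
    and Q :: "real^'n^'s"
    and R :: "real^'n^'n"
    and sigmaPhi kappaPhi :: real
  assumes p: "1 \<le> p"
    and rankA: "rank A = CARD('n)"
    and sn: "CARD('s) \<ge> CARD('n)"
    and sigma_pos: "sigmaPhi > 0"
    and kappa_ge: "kappaPhi \<ge> 1"
    and embed: "\<And>y. y \<in> range (\<lambda>x. A *v x) \<Longrightarrow>
                  sigmaPhi * pnorm p y \<le> pnorm p (Phi *v y) \<and>
                  pnorm p (Phi *v y) \<le> kappaPhi * sigmaPhi * pnorm p y"
    and QR: "Phi ** A = Q ** R"
    and Qorth: "transpose Q ** Q = mat 1"
    and Rinv: "invertible R"
  shows "kappa p (A ** matrix_inv R) \<le> kappaPhi * real CARD('s) powr \<bar>pinv p - 1/2\<bar>"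
proof -
  obtain L where L0: "L > 0" and LB: "\<And>y::real^'s. L * norm y \<le> pnorm p y \<and>
           pnorm p y \<le> L * real CARD('s) powr \<bar>pinv p - 1/2\<bar> * norm y"
    using pnorm_bounds[OF p] by blast
  define c where "c = real CARD('s) powr \<bar>pinv p - 1/2\<bar>"
  have c0: "c > 0" by (simp add: c_def)
  define B where "B = A ** matrix_inv R"
  have RR: "R ** matrix_inv R = mat 1"
  proof -
    from Rinv obtain A' where "R ** A' = mat 1 \<and> A' ** R = mat 1" unfolding invertible_def by blast
    hence "R ** matrix_inv R = mat 1 \<and> matrix_inv R ** R = mat 1"
      unfolding matrix_inv_def by (rule someI)
    thus ?thesis by blast
  qed
  have PhiB: "Phi *v (B *v x) = Q *v x" for x
  proof -
    have "Phi *v (B *v x) = (Phi ** A) *v (matrix_inv R *v x)"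
      by (simp add: B_def matrix_vector_mul_assoc[symmetric])
    also have "\<dots> = (Q ** R ** matrix_inv R) *v x" by (simp add: QR matrix_vector_mul_assoc matrix_mul_assoc)
    also have "\<dots> = Q *v x" by (simp add: matrix_mul_assoc[symmetric] RR)
    finally show ?thesis .
  qed
  have Qn: "norm (Q *v x) = norm x" for x
  proof -
    have "inner (Q *v x) (Q *v x) = inner (x v* transpose Q) (Q *v x)" by simp
    also have "\<dots> = inner x (transpose Q *v (Q *v x))" by (rule dot_lmul_matrix)
    also have "\<dots> = inner x x" by (simp add: matrix_vector_mul_assoc Qorth)
    finally show ?thesis by (simp add: norm_eq_sqrt_inner)
  qed
  have bnds: "L / (kappaPhi * sigmaPhi) \<le> pnorm p (B *v x) \<and> pnorm p (B *v x) \<le> L * c / sigmaPhi"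
    if x: "norm x = 1" for x
  proof -
    have "B *v x \<in> range (\<lambda>x. A *v x)"
      by (simp add: B_def matrix_vector_mul_assoc[symmetric])
    from embed[OF this] have e: "sigmaPhi * pnorm p (B *v x) \<le> pnorm p (Q *v x)"
      "pnorm p (Q *v x) \<le> kappaPhi * sigmaPhi * pnorm p (B *v x)" by (auto simp: PhiB)
    from LB[of "Q *v x"] have q: "L \<le> pnorm p (Q *v x)" "pnorm p (Q *v x) \<le> L * c"
      by (auto simp: Qn x c_def)
    have ks: "kappaPhi * sigmaPhi > 0" using sigma_pos kappa_ge by simp
    have "L \<le> pnorm p (B *v x) * (kappaPhi * sigmaPhi)" using e q by (simp add: mult.commute)
    hence 1: "L / (kappaPhi * sigmaPhi) \<le> pnorm p (B *v x)" using ks by (simp add: pos_divide_le_eq)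
    have "pnorm p (B *v x) * sigmaPhi \<le> L * c" using e q by (simp add: mult.commute)
    hence 2: "pnorm p (B *v x) \<le> L * c / sigmaPhi" using sigma_pos by (simp add: pos_le_divide_eq)
    show ?thesis using 1 2 by blast
  qed
  have ne: "{x :: real^'n. norm x = 1} \<noteq> {}"
  proof -
    obtain x :: "real^'n" where "norm x = 1" using vector_choose_size[of 1] by auto
    thus ?thesis by blast
  qed
  have smax: "sigma_max p B \<le> L * c / sigmaPhi"
    unfolding sigma_max_def by (rule cSUP_least[OF ne]) (use bnds in auto)
  have smin: "L / (kappaPhi * sigmaPhi) \<le> sigma_min p B"
    unfolding sigma_min_def by (rule cINF_greatest[OF ne]) (use bnds in auto)
  have "kappa p B \<le> (L * c / sigmaPhi) / (L / (kappaPhi * sigmaPhi))"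
    unfolding kappa_def
    proof (rule frac_le)
    show "0 \<le> L * c / sigmaPhi" using L0 c0 sigma_pos by simp
    show "0 < L / (kappaPhi * sigmaPhi)" using L0 sigma_pos kappa_ge by simp
  qed (use smax smin in simp_all)
  also have "\<dots> = kappaPhi * c" using L0 sigma_pos by (simp add: field_simps)
  finally show ?thesis by (simp add: B_def c_def)
qed

end
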